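(* Let $f$ be a non-increasing differentiable function with a monotone hazard rate (i.e. $\frac{|f'(x)|}{f(x)}$ is non-decreasing in $x$). Let $x_1<x_2$ be points in its domain such that $f(0)=\sqrt e\,f(x_1)\le e\,f(x_2)$. Then $x_2\le 2x_1$. *)

theory Defs
  imports "HOL-Analysis.Analysis"
begin

end

theory Submission
  imports Defs
begin

theorem lemma21:
  fixes f f' :: "real \<Rightarrow> real" and x1 x2 :: real
  assumes pos: "\<And>x. x \<ge> 0 \<Longrightarrow> f x > 0"
    and deriv: "\<And>x. x \<ge> 0 \<Longrightarrow> (f has_real_derivative f' x) (at x within {0..})"
    and nonincr: "antimono_on {0..} f"
    and hazard: "mono_on {0..} (\<lambda>x. \<bar>f' x\<bar> / f x)"
    and x1: "0 \<le> x1" and x12: "x1 < x2"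
    and eq: "f 0 = sqrt (exp 1) * f x1"
    and le: "sqrt (exp 1) * f x1 \<le> exp 1 * f x2"
  shows "x2 \<le> 2 * x1"
proof -
  define g where "g x = ln (f x)" for x
  have gd: "(g has_real_derivative f' x / f x) (at x within {0..})" if "x \<ge> 0" for x
    unfolding g_def using pos[OF that] deriv[OF that]
    by (auto intro!: derivative_eq_intros)
  have mvt: "\<exists>c\<in>{a<..<b}. g b - g a = f' c / f c * (b - a)" if "0 \<le> a" "a < b" for a b
  proof -
    have "\<exists>c\<in>{a<..<b}. g b - g a = ((*) (f' c / f c)) (b - a)"
    proof (rule mvt_simple[OF that(2)])
      fix x assume "a \<le> x" "x \<le> b"
      then have "(g has_real_derivative f' x / f x) (at x within {a..b})"
        using gd[of x] that by (auto intro: has_field_derivative_subset)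
      then show "(g has_derivative ((*) (f' x / f x))) (at x within {a..b})"
        unfolding has_field_derivative_def .
    qed
    then show ?thesis by (auto simp: mult.commute)
  qed
  have f0: "f 0 > 0" "f x1 > 0" "f x2 > 0" using pos x1 x12 by auto
  have se: "sqrt (exp 1) = exp (1/2)"
    proof (rule real_sqrt_unique)
    show "(exp (1/2))\<^sup>2 = exp (1::real)"
      by (simp add: power2_eq_square exp_add[symmetric])
  qed simp
  have g1: "g x1 = g 0 - 1/2"
    unfolding g_def using eq f0 se by (simp add: ln_mult)
  have "exp (1/2) * f x1 \<le> exp 1 * f x2" using le se by simp
  hence "ln (exp (1/2) * f x1) \<le> ln (exp 1 * f x2)" using f0 by simp
  hence g2: "g x2 \<ge> g x1 - 1/2" unfolding g_def using f0 by (simp add: ln_mult)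
  have x1p: "x1 > 0"
  proof (rule ccontr)
    assume "\<not> x1 > 0" hence "x1 = 0" using x1 by simp
    thus False using g1 by simp
  qed
  obtain c1 where c1: "c1 \<in> {0<..<x1}" "g x1 - g 0 = f' c1 / f c1 * x1"
    using mvt[of 0 x1] x1p by auto
  obtain c2 where c2: "c2 \<in> {x1<..<x2}" "g x2 - g x1 = f' c2 / f c2 * (x2 - x1)"
    using mvt[of x1 x2] x1 x12 by auto
  have fc1: "f c1 > 0" "f c2 > 0" using c1 c2 x1 pos by auto
  have q1: "f' c1 / f c1 = - 1 / (2 * x1)" using c1 g1 x1p by (simp add: field_simps)
  have a1: "\<bar>f' c1\<bar> / f c1 = 1 / (2 * x1)"
    proof -
    have "\<bar>f' c1\<bar> / f c1 = \<bar>f' c1 / f c1\<bar>" using fc1 by simp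
    also have "\<dots> = 1 / (2 * x1)" using q1 x1p by simp
    finally show ?thesis .
  qed
  have "\<bar>f' c1\<bar> / f c1 \<le> \<bar>f' c2\<bar> / f c2"
    using hazard c1 c2 by (auto intro!: mono_onD[OF hazard])
  hence h2: "\<bar>f' c2\<bar> / f c2 \<ge> 1 / (2 * x1)" using a1 by simp
  have "mono_on {0..} (\<lambda>x. - f x)" using nonincr
    by (auto simp: mono_on_def monotone_on_def)
  moreover have "((\<lambda>x. - f x) has_real_derivative - f' c2) (at c2)"
  proof -
    have "(f has_real_derivative f' c2) (at c2 within {0..})" using deriv c2 x1 by auto
    moreover have "at c2 within {0..} = at c2"
      using c2 x1 by (intro at_within_interior) auto
    ultimately show ?thesis by (auto intro!: derivative_eq_intros)
  qed
  moreover have "c2 \<in> interior {0..}" using c2 x1 by auto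
  ultimately have "- f' c2 \<ge> 0" by (rule mono_on_imp_deriv_nonneg)
  hence "f' c2 / f c2 = - (\<bar>f' c2\<bar> / f c2)" by simp
  hence "f' c2 / f c2 \<le> - 1 / (2 * x1)" using h2 by simp
  hence "g x2 - g x1 \<le> - 1 / (2 * x1) * (x2 - x1)"
  proof -
    have "f' c2 / f c2 * (x2 - x1) \<le> - 1 / (2 * x1) * (x2 - x1)"
      using \<open>f' c2 / f c2 \<le> - 1 / (2 * x1)\<close> x12 by (intro mult_right_mono) auto
    thus ?thesis using c2(2) by simp
  qed
  hence "- 1/2 \<le> - 1 / (2 * x1) * (x2 - x1)" using g2 by linarith
  hence "(x2 - x1) / (2 * x1) \<le> 1/2" by (simp add: algebra_simps)
  hence "x2 - x1 \<le> 1/2 * (2 * x1)" using x1p by (simp add: divide_le_eq)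
  thus ?thesis by simp
qed

end
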